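(* There is a function $\delta$ on the primes with $\delta(p)\to 0$ as $p\to\infty$ such that for every prime $p$ with $p\equiv 1\pmod 4$ there exists a real circulant orthogonal $p\times p$ matrix $M=(m_{i,j})$ with $(1-\delta(p))\frac{1}{\sqrt{p}}\le |m_{i,j}|\le (1+\delta(p))\frac{1}{\sqrt{p}}$ for all $i,j$ (i.e. all entries have modulus $(1+o(1))\frac{1}{\sqrt{p}}$).
   Context: A matrix $M=(m_{i,j})_{i,j\in\mathbb{Z}_p}$ is circulant if $m_{i,j}$ depends only on $j-i \bmod p$. *)

theory Defs
  imports "HOL-Computational_Algebra.Primes" Complex_Main
begin

text \<open>A p x p real matrix with rows/columns indexed by Z_p = {0..<p},
  represented as a function nat => nat => real (only entries i,j < p matter).\<close>

definition circulant :: "nat \<Rightarrow> (nat \<Rightarrow> nat \<Rightarrow> real) \<Rightarrow> bool" where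
  "circulant p m \<longleftrightarrow>
     (\<forall>i<p. \<forall>j<p. \<forall>i'<p. \<forall>j'<p.
        (j + p - i) mod p = (j' + p - i') mod p \<longrightarrow> m i j = m i' j')"

definition orthogonal_mat :: "nat \<Rightarrow> (nat \<Rightarrow> nat \<Rightarrow> real) \<Rightarrow> bool" where
  "orthogonal_mat p m \<longleftrightarrow>
     (\<forall>i<p. \<forall>j<p. (\<Sum>k<p. m k i * m k j) = (if i = j then 1 else 0))"

end

theory Submission
  imports Defs "HOL-Number_Theory.Number_Theory" "HOL-Probability.Characteristic_Functions"
begin



definition ee :: "nat \<Rightarrow> int \<Rightarrow> complex" where
  "ee p x = cis (2 * pi * of_int x / real p)"

lemma ee_add: "ee p (x + y) = ee p x * ee p y"
  by (simp add: ee_def cis_mult add_divide_distrib distrib_left)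

lemma ee_period: assumes "p > 0" shows "ee p (x + int p * t) = ee p x"
proof -
  have e: "2 * pi * of_int (int p * t) / real p = 2 * pi * (of_int t :: real)"
    using assms by simp
  have "ee p (int p * t) = 1"
    unfolding ee_def e by (rule cis_multiple_2pi) simp
  then show ?thesis by (simp add: ee_add)
qed

lemma ee_mod: assumes "p > 0" shows "ee p (x mod int p) = ee p x"
proof -
  have "x = x mod int p + int p * (x div int p)" by simp
  then have "ee p x = ee p (x mod int p + int p * (x div int p))" by simp
  also have "\<dots> = ee p (x mod int p)" using ee_period[OF assms] by blast
  finally show ?thesis by simp
qed

lemma norm_ee [simp]: "norm (ee p x) = 1"
  by (simp add: ee_def)

lemma cnj_ee: "cnj (ee p x) = ee p (-x)"
  by (simp add: ee_def cis_cnj)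

lemma ee_0 [simp]: "ee p 0 = 1" by (simp add: ee_def)

lemma geo_cis:
  fixes m :: int and N :: nat
  assumes "N > 0"
  shows "(\<Sum>k<N. cis (2*pi * of_int m * real k/real N)) = (if int N dvd m then (of_nat N::complex) else 0)"
proof (cases "int N dvd m")
  case True
  then obtain t where m: "m = int N * t" by (auto elim: dvdE)
  have "cis (2*pi * of_int m * real k/real N) = 1" for k
  proof -
    have "2*pi * of_int m * real k/real N = 2*pi * of_int (t * int k)" using assms by (simp add: m field_simps)
    thus ?thesis by simp
  qed
  with True show ?thesis by simp
next
  case False
  define z where "z = cis (2*pi * of_int m/real N)"
  have z1: "z \<noteq> 1"
  proof
    assume "z = 1"
    then have "cos (2*pi * of_int m/real N) = 1" by (simp add: z_def complex_eq_iff)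
    then obtain t::int where t: "2*pi * of_int m/real N = of_int t * 2 * pi" by (auto simp: cos_one_2pi_int)
    then have "of_int m = real N * of_int t" using assms by (simp add: field_simps)
    then have "m = int N * t" by (metis of_int_eq_iff of_int_mult of_int_of_nat_eq)
    with False show False by simp
  qed
  have "(\<Sum>k<N. cis (2*pi * of_int m * real k/real N)) = (\<Sum>k<N. z^k)"
    by (intro sum.cong refl) (simp add: z_def Complex.DeMoivre mult_ac)
  also have "\<dots> = (z^N - 1)/(z-1)" using z1 by (simp add: geometric_sum)
  also have "z^N = 1" using assms by (simp add: z_def Complex.DeMoivre)
  finally show ?thesis using False by simp
qed

lemma ee_sum:
  assumes "p > 0"
  shows "(\<Sum>k<p. ee p (m * int k)) = (if int p dvd m then of_nat p else 0)"
  using geo_cis[OF assms, of m] by (simp add: ee_def mult_ac)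




locale pc =
  fixes p g :: nat
  assumes p_prime: "prime p" and g_root: "residue_primroot p g"
begin

lemma p_gt1: "p > 1" using p_prime prime_gt_1_nat by blast
lemma p_pos: "p > 0" using p_gt1 by simp

lemma tot: "totient p = p - 1" using p_prime totient_prime by blast

lemma gen: "bij_betw (\<lambda>i. g^i mod p) {..<p-1} (totatives p)"
  using residue_primroot_is_generator[OF p_gt1 g_root] tot by simp

lemma totatives_eq: "totatives p = {0<..<p}"
proof -
  have "k \<in> totatives p \<longleftrightarrow> k \<in> {0<..<p}" for k
  proof
    assume "k \<in> totatives p"
    then have "k > 0" "k \<le> p" "coprime k p" by (auto simp: in_totatives_iff)
    moreover have "k \<noteq> p" using \<open>coprime k p\<close> p_gt1 by auto
    ultimately show "k \<in> {0<..<p}" by auto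
  next
    assume k: "k \<in> {0<..<p}"
    then have "\<not> p dvd k" by (auto dest: dvd_imp_le)
    then have "coprime p k" using p_prime prime_imp_coprime by blast
    with k show "k \<in> totatives p" by (auto simp: in_totatives_iff coprime_commute)
  qed
  then show ?thesis by blast
qed

lemma modp_in: "j mod p \<noteq> 0 \<Longrightarrow> j mod p \<in> totatives p"
  using p_pos by (auto simp: totatives_eq)

definition ind :: "nat \<Rightarrow> nat" where
  "ind j = the_inv_into {..<p-1} (\<lambda>i. g^i mod p) (j mod p)"

lemma inj_gen: "inj_on (\<lambda>i. g^i mod p) {..<p-1}"
  using gen bij_betw_def by blast

lemma ind_lt: assumes "j mod p \<noteq> 0" shows "ind j < p - 1"
proof -
  have "j mod p \<in> (\<lambda>i. g^i mod p) ` {..<p-1}" using gen modp_in[OF assms] by (simp add: bij_betw_def)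
  then show ?thesis unfolding ind_def using the_inv_into_into[OF inj_gen] by blast
qed

lemma ind_pow: assumes "j mod p \<noteq> 0" shows "g ^ ind j mod p = j mod p"
proof -
  have "j mod p \<in> (\<lambda>i. g^i mod p) ` {..<p-1}" using gen modp_in[OF assms] by (simp add: bij_betw_def)
  then show ?thesis unfolding ind_def using f_the_inv_into_f[OF inj_gen] by blast
qed

lemma ind_unique: assumes "a < p - 1" "g ^ a mod p = j mod p" shows "ind j = a"
  unfolding ind_def using assms the_inv_into_f_eq[OF inj_gen] by (metis lessThan_iff)

lemma g_coprime: "coprime p g" using g_root by (simp add: residue_primroot_def)

lemma g_pow_n: "[g ^ (p - 1) = 1] (mod p)"
proof -
  have "ord p g = p - 1" using g_root tot by (simp add: residue_primroot_def)
  then show ?thesis using ord_works[of g p] by simp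
qed

lemma g_pow_mod: "g ^ (a mod (p - 1)) mod p = g ^ a mod p"
proof -
  have "g ^ a = g ^ (a mod (p-1) + (p-1) * (a div (p-1)))" by simp
  also have "\<dots> = g ^ (a mod (p-1)) * (g ^ (p-1)) ^ (a div (p-1))"
    by (simp only: power_add power_mult)
  finally have e: "g ^ a = g ^ (a mod (p-1)) * (g ^ (p-1)) ^ (a div (p-1))" .
  have "[(g ^ (p-1)) ^ (a div (p-1)) = 1 ^ (a div (p-1))] (mod p)"
    by (rule cong_pow[OF g_pow_n])
  then have "[g ^ (a mod (p-1)) * (g ^ (p-1)) ^ (a div (p-1)) = g ^ (a mod (p-1)) * 1] (mod p)"
    by (intro cong_mult cong_refl) simp
  then have "[g ^ a = g ^ (a mod (p-1))] (mod p)" using e by simp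
  then show ?thesis unfolding Cong.cong_def by simp
qed

lemma mult_nz: "j mod p \<noteq> 0 \<Longrightarrow> k mod p \<noteq> 0 \<Longrightarrow> (j * k) mod p \<noteq> 0"
  using p_prime by (auto simp: prime_dvd_mult_iff mod_eq_0_iff_dvd)

lemma ind_mult:
  assumes "j mod p \<noteq> 0" "k mod p \<noteq> 0"
  shows "ind (j * k) = (ind j + ind k) mod (p - 1)"
proof (rule ind_unique)
  show "(ind j + ind k) mod (p - 1) < p - 1" using p_gt1 by simp
  have "g ^ ((ind j + ind k) mod (p - 1)) mod p = g ^ (ind j + ind k) mod p" by (rule g_pow_mod)
  also have "\<dots> = ((g ^ ind j mod p) * (g ^ ind k mod p)) mod p" by (simp add: power_add mod_mult_eq)
  also have "\<dots> = ((j mod p) * (k mod p)) mod p" using assms by (simp add: ind_pow)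
  also have "\<dots> = (j * k) mod p" by (simp add: mod_mult_eq)
  finally show "g ^ ((ind j + ind k) mod (p - 1)) mod p = (j * k) mod p" .
qed

lemma ind_mod: "ind (j mod p) = ind j" by (simp add: ind_def)

end



lemma cis_shift: "cis (a + 2 * pi * of_int t) = cis a"
proof -
  have "cis (a + 2 * pi * of_int t) = cis a * cis (2 * pi * of_int t)" by (simp only: cis_mult)
  also have "cis (2 * pi * of_int t) = 1" by (rule cis_multiple_2pi) simp
  finally show ?thesis by simp
qed

lemma cis_mod:
  assumes "N > 0"
  shows "cis (2 * pi * of_int r * real (x mod N) / real N) = cis (2 * pi * of_int r * real x / real N)"
proof -
  have "real x = real (x mod N) + real N * real (x div N)"
    by (metis mod_mult_div_eq of_nat_add of_nat_mult)
  then have e: "2 * pi * of_int r * real x / real N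
      = 2 * pi * of_int r * real (x mod N) / real N + 2 * pi * of_int (r * int (x div N))"
    using assms by (simp add: field_simps)
  show ?thesis by (simp only: e cis_shift)
qed

context pc
begin

lemma p_cop: "coprime p a \<longleftrightarrow> \<not> p dvd a"
  using p_prime p_gt1 by (auto intro: prime_imp_coprime dest: coprime_common_divisor)

lemma ind_minus1: assumes "p > 2" shows "ind (p - 1) = (p - 1) div 2"
proof -
  have oddp: "odd p" using p_prime assms by (metis prime_odd_nat)
  define h where "h = (p - 1) div 2"
  have ev: "even (p - 1)" using oddp p_gt1 by simp
  have h2: "h + h = p - 1" using dvd_div_mult_self[OF ev] unfolding h_def by simp
  have hpos: "0 < h" "h < p - 1" using h2 assms by (auto simp: h_def)
  define x where "x = g ^ h mod p"
  have "coprime p (g ^ h)" using g_coprime by simp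
  then have "\<not> p dvd g ^ h" using p_cop by blast
  then have xpos: "0 < x" unfolding x_def by (simp add: mod_eq_0_iff_dvd[symmetric] gr0I)
  have xlt: "x < p" unfolding x_def using p_pos by simp
  have "[g ^ h * g ^ h = 1] (mod p)" using g_pow_n h2 by (simp add: power_add[symmetric])
  then have "[x * x = 1] (mod p)" unfolding x_def by (simp add: Cong.cong_def mod_mult_eq)
  then have "[int x * int x = 1] (mod int p)" by (metis cong_int_iff of_nat_1 of_nat_mult)
  then have "[int x = 1] (mod int p) \<or> [int x = - 1] (mod int p)"
    using cong_square[of "int p" "int x"] p_prime xpos by auto
  moreover have "\<not> [int x = 1] (mod int p)"
  proof
    assume "[int x = 1] (mod int p)"
    then have "[x = 1] (mod p)" by (metis cong_int_iff of_nat_1)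
    then have "[g ^ h = 1] (mod p)" unfolding x_def by (simp add: Cong.cong_def)
    then have "ord p g dvd h" by (simp add: ord_divides')
    moreover have "ord p g = p - 1" using g_root tot by (simp add: residue_primroot_def)
    ultimately show False using hpos by (auto dest: dvd_imp_le)
  qed
  ultimately have "[int x = - 1] (mod int p)" by blast
  then have "int x mod int p = (- 1) mod int p" by (simp add: Cong.cong_def)
  moreover have "int x mod int p = int x" using xlt xpos by simp
  moreover have "(- 1) mod int p = int p - 1" using p_gt1 by (simp add: zmod_minus1)
  ultimately have "x = p - 1" by linarith
  then have "g ^ h mod p = (p - 1) mod p" using p_gt1 by (simp add: x_def)
  then show ?thesis using ind_unique hpos h_def by blast
qed

definition psi :: "int \<Rightarrow> nat \<Rightarrow> complex" where
  "psi r j = (if j mod p = 0 then 0 else cis (2 * pi * of_int r * of_nat (ind j) / real (p - 1)))"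

lemma psi_mod: "psi r (j mod p) = psi r j"
  by (simp add: psi_def ind_mod)

lemma psi_zero: "j mod p = 0 \<Longrightarrow> psi r j = 0"
  by (simp add: psi_def)

lemma norm_psi: "j mod p \<noteq> 0 \<Longrightarrow> norm (psi r j) = 1"
  by (simp add: psi_def)

lemma norm_psi_le: "norm (psi r j) \<le> 1"
  by (simp add: psi_def)

lemma psi_add: "psi a j * psi b j = psi (a + b) j"
proof (cases "j mod p = 0")
  case True then show ?thesis by (simp add: psi_def)
next
  case False
  have "cis (2 * pi * of_int a * of_nat (ind j) / real (p - 1)) * cis (2 * pi * of_int b * of_nat (ind j) / real (p - 1))
     = cis (2 * pi * of_int (a + b) * of_nat (ind j) / real (p - 1))"
    unfolding cis_mult by (rule arg_cong[where f=cis]) (simp add: algebra_simps add_divide_distrib)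
  then show ?thesis using False by (simp add: psi_def)
qed

lemma psi_period: assumes "int (p - 1) dvd (a - b)" shows "psi a j = psi b j"
proof -
  obtain t where t: "a = b + int (p - 1) * t" using assms by (metis add_diff_cancel_left' add_diff_eq dvdE)
  have e: "2 * pi * of_int a * of_nat (ind j) / real (p - 1)
        = 2 * pi * of_int b * of_nat (ind j) / real (p - 1) + 2 * pi * of_int (t * int (ind j))"
    using p_gt1 by (simp add: t field_simps)
  have "cis (2 * pi * of_int a * of_nat (ind j) / real (p - 1)) = cis (2 * pi * of_int b * of_nat (ind j) / real (p - 1))"
    by (simp only: e cis_shift)
  then show ?thesis by (simp add: psi_def)
qed

lemma psi_cnj: "cnj (psi r j) = psi (- r) j"
  by (simp add: psi_def cis_cnj)

lemma psi_0: "psi 0 j = (if j mod p = 0 then 0 else 1)"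
  by (simp add: psi_def)

lemma psi_mult: "psi r (j * k) = psi r j * psi r k"
proof (cases "j mod p = 0 \<or> k mod p = 0")
  case True
  then have "(j * k) mod p = 0" by (auto simp: mod_eq_0_iff_dvd)
  with True show ?thesis by (auto simp: psi_def)
next
  case False
  then have jk: "(j * k) mod p \<noteq> 0" using mult_nz by blast
  define x where "x = ind j + ind k"
  have i: "ind (j * k) = x mod (p - 1)" using False ind_mult x_def by blast
  have "psi r (j * k) = cis (2 * pi * of_int r * real x / real (p - 1))"
    using jk p_gt1 cis_mod[of "p - 1" r x] by (simp add: psi_def i)
  also have "\<dots> = cis (2 * pi * of_int r * of_nat (ind j) / real (p - 1) + 2 * pi * of_int r * of_nat (ind k) / real (p - 1))"
    by (simp add: x_def distrib_left add_divide_distrib)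
  finally show ?thesis using False by (simp add: psi_def cis_mult)
qed

lemma sum_lessThan_split0: "(\<Sum>j<p. f j) = f 0 + (\<Sum>j\<in>{0<..<p}. f j)"
proof -
  have "{..<p} = insert 0 {0<..<p}" using p_pos by auto
  then show ?thesis by simp
qed

lemma psi_sum_gen: "(\<Sum>j<p. psi r j) = (\<Sum>a<p-1. cis (2 * pi * of_int r * real a / real (p - 1)))"
proof -
  have "(\<Sum>j<p. psi r j) = (\<Sum>j\<in>totatives p. psi r j)"
    using sum_lessThan_split0[of "psi r"] by (simp add: totatives_eq psi_zero)
  also have "\<dots> = (\<Sum>a<p-1. psi r (g ^ a mod p))"
    using sum.reindex_bij_betw[OF gen, of "psi r"] by simp
  also have "\<dots> = (\<Sum>a<p-1. cis (2 * pi * of_int r * real a / real (p - 1)))"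
  proof (intro sum.cong refl)
    fix a assume a: "a \<in> {..<p-1}"
    then have "g ^ a mod p \<in> totatives p" using gen by (auto simp: bij_betw_def)
    then have nz: "(g ^ a mod p) mod p \<noteq> 0" by (simp add: totatives_eq)
    have "ind (g ^ a mod p) = a" using a by (intro ind_unique) auto
    then show "psi r (g ^ a mod p) = cis (2 * pi * of_int r * real a / real (p - 1))"
      using nz by (simp add: psi_def)
  qed
  finally show ?thesis .
qed

lemma psi_sum: assumes "\<not> int (p - 1) dvd r" shows "(\<Sum>j<p. psi r j) = 0"
  using psi_sum_gen geo_cis[of "p - 1" r] p_gt1 assms by simp

lemma psi0_sum: "(\<Sum>j<p. psi 0 j) = of_nat (p - 1)"
  using psi_sum_gen[of 0] by simp

lemma psi_minus1: assumes "p > 2" shows "psi r (p - 1) = cis (pi * of_int r)"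
proof -
  have oddp: "odd p" using p_prime assms by (metis prime_odd_nat)
  have nz: "(p - 1) mod p \<noteq> 0" using p_gt1 by simp
  have ev: "even (p - 1)" using oddp p_gt1 by simp
  have "(p - 1) div 2 * 2 = p - 1" using ev by (rule dvd_div_mult_self)
  then have D: "real (p - 1) = 2 * real ((p - 1) div 2)" by (metis of_nat_mult of_nat_numeral mult.commute)
  have Dp: "real ((p - 1) div 2) > 0" using assms by simp
  have "2 * pi * of_int r * real ((p - 1) div 2) / real (p - 1) = pi * of_int r"
    unfolding D using Dp by simp
  then show ?thesis using ind_minus1[OF assms] nz by (simp add: psi_def)
qed

lemma cis_pi_int: "cis (pi * of_int r) = (if even r then 1 else -1)"
proof (cases "even r")
  case True
  then obtain t where "r = 2 * t" by (auto elim: evenE)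
  then have e: "pi * of_int r = 0 + 2 * pi * of_int t" by simp
  have "cis (pi * of_int r) = cis 0" by (simp only: e cis_shift)
  then show ?thesis using True by simp
next
  case False
  then obtain t where "r = 2 * t + 1" by (auto elim: oddE)
  then have e: "pi * of_int r = pi + 2 * pi * of_int t" by (simp add: field_simps)
  have "cis (pi * of_int r) = cis pi" by (simp only: e cis_shift)
  then show ?thesis using False by (simp add: complex_eq_iff)
qed

end



lemma parseval2:
  fixes a b :: "nat \<Rightarrow> complex"
  assumes "p > 0"
  shows "(\<Sum>k<p. (\<Sum>j<p. a j * ee p (int j * int k)) * cnj (\<Sum>j<p. b j * ee p (int j * int k)))
         = of_nat p * (\<Sum>j<p. a j * cnj (b j))"
proof -
  have step1: "(\<Sum>j<p. a j * ee p (int j * int k)) * cnj (\<Sum>j<p. b j * ee p (int j * int k))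
      = (\<Sum>j<p. \<Sum>j'<p. a j * cnj (b j') * ee p ((int j - int j') * int k))" for k
  proof -
    have "ee p ((int j - int j') * int k) = ee p (int j * int k) * ee p (- (int j' * int k))" for j j'
      by (simp add: ee_add[symmetric] algebra_simps)
    then show ?thesis by (simp add: sum_product cnj_ee mult_ac)
  qed
  have "(\<Sum>k<p. (\<Sum>j<p. a j * ee p (int j * int k)) * cnj (\<Sum>j<p. b j * ee p (int j * int k)))
      = (\<Sum>k<p. \<Sum>j<p. \<Sum>j'<p. a j * cnj (b j') * ee p ((int j - int j') * int k))"
    by (intro sum.cong refl step1)
  also have "\<dots> = (\<Sum>j<p. \<Sum>k<p. \<Sum>j'<p. a j * cnj (b j') * ee p ((int j - int j') * int k))"
    by (rule sum.swap)
  also have "\<dots> = (\<Sum>j<p. \<Sum>j'<p. \<Sum>k<p. a j * cnj (b j') * ee p ((int j - int j') * int k))"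
    by (rule sum.cong[OF refl], rule sum.swap)
  also have "\<dots> = (\<Sum>j<p. \<Sum>j'<p. a j * cnj (b j') * (if j' = j then of_nat p else 0))"
  proof (intro sum.cong refl)
    fix j j' assume jj: "j \<in> {..<p}" "j' \<in> {..<p}"
    have "int p dvd (int j - int j') \<longleftrightarrow> j' = j"
    proof
      assume "int p dvd (int j - int j')"
      then have "int j mod int p = int j' mod int p" by (simp add: mod_eq_dvd_iff)
      then show "j' = j" using jj by simp
    qed simp
    then show "(\<Sum>k<p. a j * cnj (b j') * ee p ((int j - int j') * int k))
        = a j * cnj (b j') * (if j' = j then of_nat p else 0)"
      using ee_sum[OF assms, of "int j - int j'"] by (simp add: sum_distrib_left[symmetric])
  qed
  also have "\<dots> = (\<Sum>j<p. a j * cnj (b j) * of_nat p)"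
    by (intro sum.cong refl) (simp add: if_distrib cong: if_cong)
  finally show ?thesis by (simp add: sum_distrib_left mult_ac)
qed

lemma parseval:
  fixes a :: "nat \<Rightarrow> complex"
  assumes "p > 0"
  shows "(\<Sum>k<p. (\<Sum>j<p. a j * ee p (int j * int k)) * cnj (\<Sum>j<p. a j * ee p (int j * int k)))
         = of_nat p * (\<Sum>j<p. a j * cnj (a j))"
  by (rule parseval2[OF assms])

context pc
begin

definition T :: "int \<Rightarrow> nat \<Rightarrow> complex" where
  "T r k = (\<Sum>j<p. psi r j * ee p (int j * int k))"

lemma bij_mult: assumes "k mod p \<noteq> 0" shows "bij_betw (\<lambda>j. (j * k) mod p) {..<p} {..<p}"
proof -
  have cop: "coprime k p" using assms p_cop by (simp add: coprime_commute mod_eq_0_iff_dvd)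
  have inj: "inj_on (\<lambda>j. (j * k) mod p) {..<p}"
  proof (rule inj_onI)
    fix j j' assume j: "j \<in> {..<p}" "j' \<in> {..<p}" and e: "j * k mod p = j' * k mod p"
    then have "[j * k = j' * k] (mod p)" by (simp add: Cong.cong_def)
    then have "[j = j'] (mod p)" using cong_mult_rcancel_nat[OF cop] by blast
    then show "j = j'" using j by (simp add: Cong.cong_def)
  qed
  have "(\<lambda>j. (j * k) mod p) ` {..<p} \<subseteq> {..<p}" using p_pos by auto
  then have "(\<lambda>j. (j * k) mod p) ` {..<p} = {..<p}" using endo_inj_surj[OF _ _ inj] by simp
  then show ?thesis using inj by (simp add: bij_betw_def)
qed

lemma T_subst: assumes "k mod p \<noteq> 0" shows "T r 1 = psi r k * T r k"
proof -
  have "T r 1 = (\<Sum>j<p. psi r ((j * k) mod p) * ee p (int ((j * k) mod p)))"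
    unfolding T_def using sum.reindex_bij_betw[OF bij_mult[OF assms], of "\<lambda>j. psi r j * ee p (int j * int 1)"]
    by simp
  also have "\<dots> = (\<Sum>j<p. psi r k * (psi r j * ee p (int j * int k)))"
  proof (intro sum.cong refl)
    fix j
    have "ee p (int ((j * k) mod p)) = ee p (int j * int k)"
      using ee_mod[OF p_pos, of "int j * int k"] by (simp add: zmod_int)
    then show "psi r ((j * k) mod p) * ee p (int ((j * k) mod p)) = psi r k * (psi r j * ee p (int j * int k))"
      by (simp add: psi_mod psi_mult)
  qed
  finally show ?thesis by (simp add: T_def sum_distrib_left)
qed

lemma T_0: assumes "\<not> int (p - 1) dvd r" shows "T r 0 = 0"
  using psi_sum[OF assms] by (simp add: T_def)

lemma psi_cnj_mult: "j mod p \<noteq> 0 \<Longrightarrow> psi r j * cnj (psi r j) = 1"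
  by (simp add: psi_cnj psi_add psi_0)

lemma T_k: assumes "k mod p \<noteq> 0" shows "T r k = cnj (psi r k) * T r 1"
  using T_subst[OF assms, of r] psi_cnj_mult[OF assms, of r] by (simp add: mult_ac)

lemma T1_norm: assumes "\<not> int (p - 1) dvd r" shows "norm (T r 1) = sqrt p"
proof -
  have "(\<Sum>k<p. T r k * cnj (T r k)) = of_nat p * (\<Sum>j<p. psi r j * cnj (psi r j))"
    using parseval[OF p_pos, of "psi r"] by (simp add: T_def)
  also have "(\<Sum>j<p. psi r j * cnj (psi r j)) = of_nat (p - 1)"
    using psi0_sum by (simp add: psi_cnj psi_add)
  finally have A: "(\<Sum>k<p. T r k * cnj (T r k)) = of_nat p * of_nat (p - 1)" .
  have "(\<Sum>k<p. T r k * cnj (T r k)) = T r 0 * cnj (T r 0) + (\<Sum>k\<in>{0<..<p}. T r k * cnj (T r k))"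
    by (rule sum_lessThan_split0)
  also have "(\<Sum>k\<in>{0<..<p}. T r k * cnj (T r k)) = (\<Sum>k\<in>{0<..<p}. T r 1 * cnj (T r 1))"
  proof (intro sum.cong refl)
    fix k assume "k \<in> {0<..<p}"
    then have nz: "k mod p \<noteq> 0" by simp
    have "T r k * cnj (T r k) = (psi r k * cnj (psi r k)) * (T r 1 * cnj (T r 1))"
      by (simp add: T_k[OF nz] mult_ac)
    then show "T r k * cnj (T r k) = T r 1 * cnj (T r 1)" using psi_cnj_mult[OF nz] by simp
  qed
  finally have "of_nat p = T r 1 * cnj (T r 1)"
    using A T_0[OF assms] p_gt1 by simp
  then have "T r 1 * cnj (T r 1) = of_nat p" by simp
  then have "complex_of_real ((norm (T r 1))\<^sup>2) = complex_of_real (real p)"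
    using complex_norm_square[of "T r 1"] by simp
  then have "(norm (T r 1))\<^sup>2 = real p" using of_real_eq_iff by blast
  then show ?thesis by (metis norm_ge_zero real_sqrt_unique)
qed

lemma T_norm_le: assumes "\<not> int (p - 1) dvd r" shows "norm (T r k) \<le> sqrt p"
proof (cases "k mod p = 0")
  case True
  then obtain q where q: "k = p * q" by (auto simp: mod_eq_0_iff_dvd elim: dvdE)
  have "ee p (int j * int k) = 1" for j
  proof -
    have "ee p (int j * int k) = ee p (0 + int p * (int j * int q))" by (simp add: q algebra_simps)
    also have "\<dots> = 1" using ee_period[OF p_pos, of 0 "int j * int q"] by simp
    finally show ?thesis .
  qed
  then have "T r k = T r 0" unfolding T_def by simp
  then show ?thesis using T_0[OF assms] by simp
next
  case False
  then show ?thesis using T_k[OF False] T1_norm[OF assms] norm_psi[OF False] by (simp add: norm_mult)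
qed

end



definition cc :: "nat \<Rightarrow> (nat \<Rightarrow> complex) \<Rightarrow> nat \<Rightarrow> complex" where
  "cc p lam k = (\<Sum>l<p. lam l * ee p (int l * int k)) / of_nat p"

lemma ee_cong:
  assumes "p > 0" "a mod int p = b mod int p"
  shows "ee p (a * x) = ee p (b * x)"
proof -
  have "ee p (a * x) = ee p ((a * x) mod int p)" using ee_mod[OF assms(1)] by simp
  also have "(a * x) mod int p = (b * x) mod int p"
    by (metis assms(2) mod_mult_left_eq)
  also have "ee p ((b * x) mod int p) = ee p (b * x)" using ee_mod[OF assms(1)] by simp
  finally show ?thesis .
qed

lemma neg_mod_int: "l \<le> p \<Longrightarrow> int ((p - l) mod p) mod int p = (- int l) mod int p"
proof -
  assume l: "l \<le> p"
  have "int ((p - l) mod p) mod int p = int (p - l) mod int p" by (simp add: zmod_int)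
  also have "int (p - l) = - int l + int p * 1" using l by simp
  also have "(- int l + int p * 1) mod int p = (- int l) mod int p" by (simp only: mod_mult_self2)
  finally show ?thesis .
qed

lemma invol_bij: fixes p :: nat assumes "p > 0" shows "bij_betw (\<lambda>l. (p - l) mod p) {..<p} {..<p}"
proof (rule bij_betw_byWitness[where f' = "\<lambda>l. (p - l) mod p"])
  show "\<forall>a\<in>{..<p}. (p - (p - a) mod p) mod p = a"
  proof
    fix a assume a: "a \<in> {..<p}"
    show "(p - (p - a) mod p) mod p = a"
    proof (cases "a = 0")
      case True then show ?thesis by simp
    next
      case False
      then have "(p - a) mod p = p - a" using a by simp
      then show ?thesis using a by simp
    qed
  qed
  then show "\<forall>a\<in>{..<p}. (p - (p - a) mod p) mod p = a" .
qed (use assms in auto)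

lemma cc_real:
  assumes p: "p > 0" and sym: "\<And>l. l < p \<Longrightarrow> lam ((p - l) mod p) = cnj (lam l)"
  shows "cnj (cc p lam k) = cc p lam k"
proof -
  have "cnj (cc p lam k) = (\<Sum>l<p. cnj (lam l) * ee p (- int l * int k)) / of_nat p"
    by (simp add: cc_def cnj_ee)
  also have "(\<Sum>l<p. cnj (lam l) * ee p (- int l * int k))
      = (\<Sum>l<p. lam ((p - l) mod p) * ee p (int ((p - l) mod p) * int k))"
  proof (intro sum.cong refl)
    fix l assume l: "l \<in> {..<p}"
    have "ee p (int ((p - l) mod p) * int k) = ee p (- int l * int k)"
      using l by (intro ee_cong[OF p] neg_mod_int) auto
    then show "cnj (lam l) * ee p (- int l * int k) = lam ((p - l) mod p) * ee p (int ((p - l) mod p) * int k)"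
      using sym l by simp
  qed
  also have "\<dots> = (\<Sum>l<p. lam l * ee p (int l * int k))"
    using sum.reindex_bij_betw[OF invol_bij[OF p], of "\<lambda>l. lam l * ee p (int l * int k)"] by simp
  finally show ?thesis by (simp add: cc_def)
qed

lemma cc_shift:
  assumes p: "p > 0" and i: "i < p" and k: "k < p"
  shows "cc p lam ((i + p - k) mod p) = cnj (\<Sum>l<p. cnj (lam l * ee p (int l * int i)) * ee p (int l * int k)) / of_nat p"
proof -
  have "ee p (int l * int ((i + p - k) mod p)) = ee p (int l * int i) * ee p (- (int l * int k))" for l
  proof -
    have "int ((i + p - k) mod p) mod int p = (int i - int k) mod int p"
    proof -
      have "int ((i + p - k) mod p) mod int p = int (i + p - k) mod int p" by (simp add: zmod_int)
      also have "int (i + p - k) = (int i - int k) + int p * 1" using k by simp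
      also have "((int i - int k) + int p * 1) mod int p = (int i - int k) mod int p" by (simp only: mod_mult_self2)
      finally show ?thesis .
    qed
    then have "ee p (int ((i + p - k) mod p) * int l) = ee p ((int i - int k) * int l)"
      by (rule ee_cong[OF p])
    then show ?thesis by (simp add: ee_add[symmetric] algebra_simps)
  qed
  then show ?thesis by (simp add: cc_def cnj_ee mult_ac)
qed

lemma cc_autocorr:
  assumes p: "p > 0" and i: "i < p" and j: "j < p"
    and nrm: "\<And>l. l < p \<Longrightarrow> lam l * cnj (lam l) = 1"
  shows "(\<Sum>k<p. cc p lam ((i + p - k) mod p) * cnj (cc p lam ((j + p - k) mod p)))
         = (if i = j then 1 else 0)"
proof -
  define a where "a l = cnj (lam l * ee p (int l * int i))" for l
  define b where "b l = cnj (lam l * ee p (int l * int j))" for l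
  have "(\<Sum>k<p. cc p lam ((i + p - k) mod p) * cnj (cc p lam ((j + p - k) mod p)))
      = (\<Sum>k<p. cnj ((\<Sum>l<p. a l * ee p (int l * int k)) * cnj (\<Sum>l<p. b l * ee p (int l * int k)))) / (of_nat p * of_nat p)"
  proof -
    have "cc p lam ((i + p - k) mod p) * cnj (cc p lam ((j + p - k) mod p))
       = cnj ((\<Sum>l<p. a l * ee p (int l * int k)) * cnj (\<Sum>l<p. b l * ee p (int l * int k))) / (of_nat p * of_nat p)"
      if k: "k < p" for k
    proof -
      have e1: "cc p lam ((i + p - k) mod p) = cnj (\<Sum>l<p. a l * ee p (int l * int k)) / of_nat p"
        using cc_shift[OF p i k] by (simp only: a_def)
      have e2: "cc p lam ((j + p - k) mod p) = cnj (\<Sum>l<p. b l * ee p (int l * int k)) / of_nat p"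
        using cc_shift[OF p j k] by (simp only: b_def)
      have gen: "cnj x / of_nat n * cnj (cnj y / of_nat n) = cnj (x * cnj y) / (of_nat n * of_nat n)"
        for x y :: complex and n :: nat by simp
      show ?thesis unfolding e1 e2 by (rule gen)
    qed
    then have pk: "\<And>k. k \<in> {..<p} \<Longrightarrow> cc p lam ((i + p - k) mod p) * cnj (cc p lam ((j + p - k) mod p))
       = cnj ((\<Sum>l<p. a l * ee p (int l * int k)) * cnj (\<Sum>l<p. b l * ee p (int l * int k))) / (of_nat p * of_nat p)"
      by blast
    show ?thesis
      by (subst sum.cong[OF refl pk], assumption) (rule sum_divide_distrib[symmetric])
  qed
  also have "(\<Sum>k<p. cnj ((\<Sum>l<p. a l * ee p (int l * int k)) * cnj (\<Sum>l<p. b l * ee p (int l * int k))))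
      = cnj (\<Sum>k<p. (\<Sum>l<p. a l * ee p (int l * int k)) * cnj (\<Sum>l<p. b l * ee p (int l * int k)))"
    by (rule cnj_sum[symmetric])
  also have "\<dots> = cnj (of_nat p * (\<Sum>l<p. a l * cnj (b l)))"
    by (simp only: parseval2[OF p])
  also have "(\<Sum>l<p. a l * cnj (b l)) = (\<Sum>l<p. ee p ((int j - int i) * int l))"
  proof (intro sum.cong refl)
    fix l assume "l \<in> {..<p}"
    then have n: "cnj (lam l) * lam l = 1" using nrm[of l] by (simp add: mult.commute)
    have "a l * cnj (b l) = (cnj (lam l) * lam l) * (ee p (- (int l * int i)) * ee p (int l * int j))"
      by (simp add: a_def b_def cnj_ee mult_ac)
    also have "ee p (- (int l * int i)) * ee p (int l * int j) = ee p ((int j - int i) * int l)"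
      by (simp add: ee_add[symmetric] algebra_simps)
    finally show "a l * cnj (b l) = ee p ((int j - int i) * int l)" using n by simp
  qed
  also have "\<dots> = (if int p dvd (int j - int i) then of_nat p else 0)" by (rule ee_sum[OF p])
  also have "(int p dvd (int j - int i)) \<longleftrightarrow> i = j"
  proof
    assume "int p dvd (int j - int i)"
    then have "int j mod int p = int i mod int p" by (simp add: mod_eq_dvd_iff)
    then show "i = j" using i j by simp
  qed simp
  finally show ?thesis using p by auto
qed

definition matM :: "nat \<Rightarrow> (nat \<Rightarrow> complex) \<Rightarrow> nat \<Rightarrow> nat \<Rightarrow> real" where
  "matM p lam i j = Re (cc p lam ((j + p - i) mod p))"

lemma matM_circulant: "circulant p (matM p lam)"
  unfolding circulant_def matM_def by auto

lemma matM_orth: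
  assumes p: "p > 0"
    and nrm: "\<And>l. l < p \<Longrightarrow> lam l * cnj (lam l) = 1"
    and sym: "\<And>l. l < p \<Longrightarrow> lam ((p - l) mod p) = cnj (lam l)"
  shows "orthogonal_mat p (matM p lam)"
  unfolding orthogonal_mat_def
proof (intro allI impI)
  fix i j assume i: "i < p" and j: "j < p"
  have re: "Re z * Re w = Re (z * cnj w)" if "cnj z = z" "cnj w = w" for z w :: complex
  proof -
    have "Im z = 0" "Im w = 0" using that by (auto simp: complex_eq_iff)
    then show ?thesis by simp
  qed
  have "(\<Sum>k<p. matM p lam k i * matM p lam k j)
      = (\<Sum>k<p. Re (cc p lam ((i + p - k) mod p) * cnj (cc p lam ((j + p - k) mod p))))"
    unfolding matM_def by (intro sum.cong refl re cc_real[where lam=lam, OF p sym]) auto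
  also have "\<dots> = Re (\<Sum>k<p. cc p lam ((i + p - k) mod p) * cnj (cc p lam ((j + p - k) mod p)))"
    by simp
  also have "\<dots> = (if i = j then 1 else 0)" using cc_autocorr[OF p i j nrm] by simp
  finally show "(\<Sum>k<p. matM p lam k i * matM p lam k j) = (if i = j then 1 else 0)" .
qed

lemma matM_abs:
  assumes p: "p > 0" and sym: "\<And>l. l < p \<Longrightarrow> lam ((p - l) mod p) = cnj (lam l)"
  shows "\<bar>matM p lam i j\<bar> = norm (cc p lam ((j + p - i) mod p))"
proof -
  have "cnj (cc p lam ((j + p - i) mod p)) = cc p lam ((j + p - i) mod p)" by (rule cc_real[where lam=lam, OF p sym])
  then have "Im (cc p lam ((j + p - i) mod p)) = 0" by (auto simp: complex_eq_iff)
  then show ?thesis by (simp add: matM_def cmod_eq_Re)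
qed




lemma cis_taylor: "norm (cis x - (1 + \<i> * of_real x - (of_real x)^2 / 2)) \<le> \<bar>x\<bar>^3 / 6"
proof -
  have "(\<Sum>k\<le>2. (\<i> * complex_of_real x) ^ k / fact k) = 1 + \<i> * of_real x - (of_real x)^2 / 2"
    by (simp add: numeral_2_eq_2 power2_eq_square algebra_simps)
  moreover have "cis x = iexp x" by (simp add: cis_conv_exp)
  ultimately show ?thesis using iexp_approx1[of x 2] by (simp add: numeral_3_eq_3)
qed

locale pc4 = pc +
  assumes p_mod4: "p mod 4 = 1" and p13: "p \<ge> 13"
begin

definition mm :: int where "mm = int ((p - 1) div 2)"

lemma n_eq: "int (p - 1) = 2 * mm"
proof -
  have "even (p - 1)" using p_mod4 p13 by presburger
  then show ?thesis unfolding mm_def by (metis dvd_mult_div_cancel of_nat_mult of_nat_numeral)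
qed

lemma mm_even: "even mm"
proof -
  have "4 dvd (p - 1)" using p_mod4 p13 by presburger
  then have "even ((p - 1) div 2)" by (metis dvd_div_iff_mult dvd_mult_div_cancel even_mult_iff even_numeral zero_neq_numeral mult.commute numeral_Bit0_eq_double)
  then show ?thesis unfolding mm_def by simp
qed

lemma mm_ge: "mm \<ge> 6" using p13 unfolding mm_def by simp

lemma p_gt2: "p > 2" using p13 by simp

lemma nontriv: assumes "r \<noteq> 0" "\<bar>r\<bar> \<le> mm + 2" shows "\<not> int (p - 1) dvd r"
proof
  assume "int (p - 1) dvd r"
  then have "2 * mm dvd r" using n_eq by simp
  then have "\<bar>2 * mm\<bar> \<le> \<bar>r\<bar>" using assms(1) by (simp add: dvd_imp_le_int)
  then show False using assms mm_ge by simp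
qed

lemma psi_mm_period: "psi (r + 2 * mm) l = psi r l"
  by (rule psi_period) (unfold n_eq, simp)

lemma psi_neg_idx: "l \<le> p \<Longrightarrow> psi r ((p - l) mod p) = psi r (p - 1) * psi r l"
proof -
  assume l: "l \<le> p"
  have "int (((p - 1) * l) mod p) = int ((p - l) mod p)"
  proof -
    have "int (((p - 1) * l) mod p) = ((int p - 1) * int l) mod int p" using p_gt1 by (simp add: zmod_int of_nat_diff)
    also have "(int p - 1) * int l = (- int l) + int p * int l" by (simp add: algebra_simps)
    also have "((- int l) + int p * int l) mod int p = (- int l) mod int p" by (simp only: mod_mult_self2)
    also have "\<dots> = int ((p - l) mod p) mod int p" using neg_mod_int[OF l] by simp
    also have "\<dots> = int ((p - l) mod p)" by (metis mod_mod_trivial zmod_int)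
    finally show ?thesis .
  qed
  then have "((p - 1) * l) mod p = (p - l) mod p" by simp
  then show ?thesis by (metis psi_mod psi_mult)
qed

lemma psi_odd: "odd r \<Longrightarrow> l \<le> p \<Longrightarrow> psi r ((p - l) mod p) = - psi r l"
  using psi_neg_idx psi_minus1[OF p_gt2] cis_pi_int by simp

lemma psi_even: "even r \<Longrightarrow> l \<le> p \<Longrightarrow> psi r ((p - l) mod p) = psi r l"
  using psi_neg_idx psi_minus1[OF p_gt2] cis_pi_int by simp

lemma chi_cnj: "cnj (psi mm l) = psi mm l"
  by (simp add: psi_cnj) (rule psi_period, unfold n_eq, simp)

lemma chi_sq: "psi mm l * psi mm l = psi 0 l"
  by (simp add: psi_add) (rule psi_period, unfold n_eq, simp)

lemma Tm_real: "cnj (T mm 1) = T mm 1"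
proof -
  have nz: "(p - 1) mod p \<noteq> 0" using p_gt1 by simp
  have "T mm 1 = psi mm (p - 1) * T mm (p - 1)" by (rule T_subst[OF nz])
  also have "psi mm (p - 1) = 1" using psi_minus1[OF p_gt2] cis_pi_int mm_even by simp
  also have "T mm (p - 1) = (\<Sum>j<p. psi mm j * ee p (- 1 * int j))"
    unfolding T_def
  proof (intro sum.cong refl)
    fix j
    have "int (p - 1) mod int p = (- 1) mod int p"
      using neg_mod_int[of 1 p] p_gt1 by (simp add: zmod_int)
    then have "ee p (int (p - 1) * int j) = ee p (- 1 * int j)" by (rule ee_cong[OF p_pos])
    then show "psi mm j * ee p (int j * int (p - 1)) = psi mm j * ee p (- 1 * int j)" by (simp add: mult.commute)
  qed
  also have "\<dots> = cnj (T mm 1)" by (simp add: T_def cnj_ee chi_cnj)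
  finally show ?thesis by simp
qed

definition ss :: real where "ss = Re (T mm 1) / sqrt p"

lemma Tm_eq: "T mm 1 = of_real (ss * sqrt p)"
proof -
  have "Im (T mm 1) = 0" using Tm_real by (auto simp: complex_eq_iff)
  then show ?thesis using p_pos by (simp add: ss_def complex_eq_iff)
qed

lemma ss_abs: "\<bar>ss\<bar> = 1"
proof -
  have nt: "\<not> int (p - 1) dvd mm" using mm_ge by (intro nontriv) auto
  have "norm (T mm 1) = sqrt p" by (rule T1_norm[OF nt])
  moreover have "norm (T mm 1) = norm (of_real (ss * sqrt p) :: complex)" by (simp only: Tm_eq)
  ultimately have "\<bar>ss * sqrt p\<bar> = sqrt p" by (metis norm_of_real)
  then show "\<bar>ss\<bar> = 1" using p_pos by (simp add: abs_mult)
qed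

lemma ss_sq: "ss * ss = 1"
proof -
  have "ss * ss = \<bar>ss\<bar> * \<bar>ss\<bar>" by (rule abs_mult_self_eq[symmetric])
  also have "\<dots> = 1" by (simp add: ss_abs)
  finally show ?thesis .
qed

end



lemma alg_CY:
  fixes A B X ZZ P Q :: complex
  assumes "X * A = P" "X * B = Q" "X * X = ZZ" "ZZ * A = A" "ZZ * B = B"
  shows "X * ((A - B) * (1 - X) / (4 * \<i>)) = (P - A - Q + B) / (4 * \<i>)"
proof -
  have "X * ((A - B) * (1 - X)) = X * A - X * B - (X * X) * A + (X * X) * B" by (simp add: algebra_simps)
  also have "\<dots> = P - Q - A + B" by (simp only: assms)
  finally have e: "X * ((A - B) * (1 - X)) = P - A - Q + B" by simp
  have "X * ((A - B) * (1 - X) / (4 * \<i>)) = X * ((A - B) * (1 - X)) / (4 * \<i>)" by simp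
  then show ?thesis by (simp only: e)
qed

lemma alg_CY2:
  fixes A B X ZZ P2 M2 Xp Xm :: complex
  assumes "A * A = P2" "B * B = M2" "A * B = ZZ" "X * X = ZZ" "ZZ * X = X"
    "P2 * X = Xp" "M2 * X = Xm" "P2 * ZZ = P2" "M2 * ZZ = M2" "ZZ * ZZ = ZZ"
  shows "X * ((A - B) * (1 - X) / (4 * \<i>))^2 = - (Xp - P2 - 2 * X + 2 * ZZ + Xm - M2) / 8"
proof -
  have e1: "(A - B)^2 = P2 - 2 * ZZ + M2"
  proof -
    have "(A - B)^2 = A * A - 2 * (A * B) + B * B" by (simp add: power2_eq_square algebra_simps)
    then show ?thesis using assms by simp
  qed
  have e2: "X * (1 - X)^2 = 2 * X - 2 * ZZ"
  proof -
    have "X * (1 - X)^2 = X - 2 * (X * X) + (X * X) * X" by (simp add: power2_eq_square algebra_simps)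
    then show ?thesis using assms by simp
  qed
  have e3: "(P2 - 2 * ZZ + M2) * (2 * X - 2 * ZZ) = 2 * ((P2 * X) - (P2 * ZZ) - 2 * (ZZ * X) + 2 * (ZZ * ZZ) + (M2 * X) - (M2 * ZZ))"
    by (simp add: algebra_simps)
  have q: "(4 * \<i>)^2 = (-16 :: complex)" by (simp add: power2_eq_square)
  have r: "X * ((A - B) * (1 - X))^2 = (A - B)^2 * (X * (1 - X)^2)" by (simp add: power_mult_distrib)
  have "X * ((A - B) * (1 - X) / (4 * \<i>))^2 = X * ((A - B) * (1 - X))^2 / (4 * \<i>)^2"
    by (simp only: power_divide times_divide_eq_right)
  also have "\<dots> = ((A - B)^2 * (X * (1 - X)^2)) / (-16)" by (simp only: q r)
  also have "\<dots> = (P2 - 2 * ZZ + M2) * (2 * X - 2 * ZZ) / (-16)" by (simp only: e1 e2)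
  also have "\<dots> = 2 * (Xp - P2 - 2 * X + 2 * ZZ + Xm - M2) / (-16)" using assms by (simp only: e3)
  also have "\<dots> = - (Xp - P2 - 2 * X + 2 * ZZ + Xm - M2) / 8"
    by (simp add: field_simps)
  finally show ?thesis .
qed

context pc4
begin

definition Yc :: "nat \<Rightarrow> complex" where
  "Yc l = (psi 1 l - psi (-1) l) * (1 - psi mm l) / (4 * \<i>)"

definition yy :: "nat \<Rightarrow> real" where "yy l = Re (Yc l)"

definition beta :: real where "beta = sqrt 8 / sqrt (sqrt p)"

definition lam :: "nat \<Rightarrow> complex" where
  "lam l = (if l = 0 then 1 else of_real ss * psi mm l * cis (beta * yy l))"

lemma chi_neg: "psi (- mm) l = psi mm l"
  by (rule psi_period) (unfold n_eq, simp)

lemma Yc_real: "cnj (Yc l) = Yc l"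
proof -
  have "cnj (Yc l) = (psi (-1) l - psi 1 l) * (1 - psi mm l) / (- (4 * \<i>))"
    by (simp add: Yc_def psi_cnj chi_neg)
  also have "\<dots> = Yc l" by (simp add: Yc_def field_simps)
  finally show ?thesis .
qed

lemma of_real_yy: "complex_of_real (yy l) = Yc l"
proof -
  have "Im (Yc l) = 0" using Yc_real[of l] by (auto simp: complex_eq_iff)
  then show ?thesis by (simp add: yy_def complex_eq_iff)
qed

lemma norm_Yc: "norm (Yc l) \<le> 1"
proof -
  have a: "norm (psi 1 l - psi (-1) l) \<le> 2"
    using norm_triangle_ineq4[of "psi 1 l" "psi (-1) l"] norm_psi_le[of 1 l] norm_psi_le[of "-1" l] by linarith
  have b: "norm (1 - psi mm l) \<le> 2"
    using norm_triangle_ineq4[of 1 "psi mm l"] norm_psi_le[of mm l] by simp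
  have "norm (Yc l) = norm (psi 1 l - psi (-1) l) * norm (1 - psi mm l) / 4"
    by (simp add: Yc_def norm_mult norm_divide)
  also have "\<dots> \<le> 2 * 2 / 4" using a b by (intro divide_right_mono mult_mono) auto
  finally show ?thesis by simp
qed

lemma abs_yy: "\<bar>yy l\<bar> \<le> 1"
  using norm_Yc[of l] of_real_yy[of l] by (metis norm_of_real)

lemma Yc_neg: "l \<le> p \<Longrightarrow> Yc ((p - l) mod p) = - Yc l"
  by (simp add: Yc_def psi_odd psi_even mm_even) (simp add: minus_divide_left algebra_simps)

lemma yy_neg: "l \<le> p \<Longrightarrow> yy ((p - l) mod p) = - yy l"
  by (simp add: yy_def Yc_neg)

lemma cis_cnj_mult: "cis x * cnj (cis x) = 1"
  by (simp add: cis_cnj cis_mult)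

lemma lam_norm: assumes "l < p" shows "lam l * cnj (lam l) = 1"
proof (cases "l = 0")
  case True then show ?thesis by (simp add: lam_def)
next
  case False
  then have nz: "l mod p \<noteq> 0" using assms by simp
  have "lam l * cnj (lam l) = of_real (ss * ss) * (psi mm l * cnj (psi mm l)) * (cis (beta * yy l) * cnj (cis (beta * yy l)))"
    using False by (simp add: lam_def mult_ac)
  also have "\<dots> = 1" using ss_sq psi_cnj_mult[OF nz] cis_cnj_mult by simp
  finally show ?thesis .
qed

lemma lam_sym: assumes "l < p" shows "lam ((p - l) mod p) = cnj (lam l)"
proof (cases "l = 0")
  case True then show ?thesis by (simp add: lam_def)
next
  case False
  then have e: "(p - l) mod p = p - l" and nz: "p - l \<noteq> 0" using assms by auto
  have "lam ((p - l) mod p) = of_real ss * psi mm ((p - l) mod p) * cis (beta * yy ((p - l) mod p))"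
    using nz e by (simp add: lam_def)
  also have "\<dots> = of_real ss * psi mm l * cis (- (beta * yy l))"
    using assms by (simp add: psi_even mm_even yy_neg)
  also have "\<dots> = cnj (lam l)" using False by (simp add: lam_def cis_cnj chi_cnj)
  finally show ?thesis .
qed

end



context pc4
begin

lemma nt: "r \<noteq> 0 \<Longrightarrow> \<bar>r\<bar> \<le> mm + 2 \<Longrightarrow> \<not> int (p - 1) dvd r" by (rule nontriv)

lemma psi_2mm: "psi (2 * mm) l = psi 0 l"
  by (rule psi_period) (unfold n_eq, simp)

lemma CY: "psi mm l * Yc l = (psi (mm + 1) l - psi 1 l - psi (mm - 1) l + psi (-1) l) / (4 * \<i>)"
  unfolding Yc_def
  by (rule alg_CY[where ZZ="psi 0 l"]) (simp_all add: psi_add psi_2mm)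

lemma CY2: "psi mm l * (Yc l)^2 = - (psi (mm + 2) l - psi 2 l - 2 * psi mm l + 2 * psi 0 l + psi (mm - 2) l - psi (-2) l) / 8"
  unfolding Yc_def
  by (rule alg_CY2[where ZZ="psi 0 l"]) (simp_all add: psi_add psi_2mm add.commute)

definition S1 :: "nat \<Rightarrow> complex" where
  "S1 k = (\<Sum>l<p. psi mm l * Yc l * ee p (int l * int k))"
definition S2 :: "nat \<Rightarrow> complex" where
  "S2 k = (\<Sum>l<p. psi mm l * (Yc l)^2 * ee p (int l * int k))"
definition Rr :: "nat \<Rightarrow> complex" where
  "Rr l = cis (beta * yy l) - (1 + \<i> * of_real (beta * yy l) - (of_real (beta * yy l))^2 / 2)"
definition S3 :: "nat \<Rightarrow> complex" where
  "S3 k = (\<Sum>l<p. psi mm l * Rr l * ee p (int l * int k))"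

lemma S1_eq: "S1 k = (T (mm + 1) k - T 1 k - T (mm - 1) k + T (-1) k) / (4 * \<i>)"
  unfolding S1_def T_def CY
  by (simp add: sum_subtractf sum.distrib sum_divide_distrib[symmetric] algebra_simps)

lemma S2_eq: "S2 k = - (T (mm + 2) k - T 2 k - 2 * T mm k + 2 * T 0 k + T (mm - 2) k - T (-2) k) / 8"
  unfolding S2_def T_def CY2
  by (simp add: sum_subtractf sum.distrib sum_divide_distrib[symmetric] sum_distrib_left algebra_simps)

lemma sqrtp_pos: "sqrt (real p) > 0" using p_pos by simp

lemma S1_bound: "norm (S1 k) \<le> sqrt p"
proof -
  have b1: "norm (T (mm + 1) k) \<le> sqrt p" by (rule T_norm_le, rule nt) (use mm_ge in auto)
  have b2: "norm (T 1 k) \<le> sqrt p" by (rule T_norm_le, rule nt) (use mm_ge in auto)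
  have b3: "norm (T (mm - 1) k) \<le> sqrt p" by (rule T_norm_le, rule nt) (use mm_ge in auto)
  have b4: "norm (T (-1) k) \<le> sqrt p" by (rule T_norm_le, rule nt) (use mm_ge in auto)
  have "norm (T (mm + 1) k - T 1 k - T (mm - 1) k + T (-1) k)
     \<le> norm (T (mm + 1) k) + norm (T 1 k) + norm (T (mm - 1) k) + norm (T (-1) k)"
  proof -
    fix a b c d :: complex
    have "norm (a - b - c + d) \<le> norm (a - b - c) + norm d" by (rule norm_triangle_ineq)
    also have "norm (a - b - c) \<le> norm (a - b) + norm c" by (rule norm_triangle_ineq4)
    also have "norm (a - b) \<le> norm a + norm b" by (rule norm_triangle_ineq4)
    finally show "norm (a - b - c + d) \<le> norm a + norm b + norm c + norm d" by simp
  qed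
  also have "\<dots> \<le> 4 * sqrt p" using b1 b2 b3 b4 by simp
  finally show ?thesis by (simp add: S1_eq norm_divide norm_mult)
qed

lemma T0_0: "T 0 0 = of_nat (p - 1)"
  using psi0_sum by (simp add: T_def)

lemma T0_k: assumes "0 < k" "k < p" shows "T 0 k = -1"
proof -
  have "(\<Sum>l<p. ee p (int k * int l)) = 0" using ee_sum[OF p_pos, of "int k"] assms by (auto dest: zdvd_imp_le)
  then have z: "1 + (\<Sum>l\<in>{0<..<p}. ee p (int l * int k)) = 0"
    using sum_lessThan_split0[of "\<lambda>l. ee p (int l * int k)"] by (simp add: mult.commute)
  have "T 0 k = (\<Sum>l\<in>{0<..<p}. ee p (int l * int k))"
    unfolding T_def using sum_lessThan_split0[of "\<lambda>l. psi 0 l * ee p (int l * int k)"]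
    by (simp add: psi_0)
  then show ?thesis using z by (simp add: eq_neg_iff_add_eq_0 add.commute)
qed

lemma S2_0: "S2 0 = - of_nat (p - 1) / 4"
proof -
  have "T (mm + 2) 0 = 0" "T 2 0 = 0" "T mm 0 = 0" "T (mm - 2) 0 = 0" "T (-2) 0 = 0"
    by (rule T_0, rule nt, use mm_ge in auto)+
  then show ?thesis by (simp add: S2_eq T0_0)
qed

lemma S2_bound: assumes "0 < k" "k < p" shows "norm (S2 k) \<le> (6 * sqrt p + 2) / 8"
proof -
  have b1: "norm (T (mm + 2) k) \<le> sqrt p" by (rule T_norm_le, rule nt) (use mm_ge in auto)
  have b2: "norm (T 2 k) \<le> sqrt p" by (rule T_norm_le, rule nt) (use mm_ge in auto)
  have b3: "norm (T mm k) \<le> sqrt p" by (rule T_norm_le, rule nt) (use mm_ge in auto)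
  have b4: "norm (T (mm - 2) k) \<le> sqrt p" by (rule T_norm_le, rule nt) (use mm_ge in auto)
  have b5: "norm (T (-2) k) \<le> sqrt p" by (rule T_norm_le, rule nt) (use mm_ge in auto)
  have t0: "T 0 k = -1" by (rule T0_k[OF assms])
  define a where "a = T (mm + 2) k" define b where "b = T 2 k" define c where "c = T mm k"
  define d where "d = T (mm - 2) k" define e where "e = T (-2) k"
  have "norm (a - b - 2 * c + 2 * (-1) + d - e) \<le> norm a + norm b + 2 * norm c + 2 + norm d + norm e"
  proof -
    have "norm (a - b - 2 * c + 2 * (-1) + d - e) \<le> norm (a - b - 2 * c + 2 * (-1) + d) + norm e"
      by (rule norm_triangle_ineq4)
    also have "norm (a - b - 2 * c + 2 * (-1) + d) \<le> norm (a - b - 2 * c + 2 * (-1)) + norm d"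
      by (rule norm_triangle_ineq)
    also have "norm (a - b - 2 * c + 2 * (-1)) \<le> norm (a - b - 2 * c) + 2"
      using norm_triangle_ineq[of "a - b - 2 * c" "2 * (-1)"] by simp
    also have "norm (a - b - 2 * c) \<le> norm (a - b) + norm (2 * c)" by (rule norm_triangle_ineq4)
    also have "norm (a - b) \<le> norm a + norm b" by (rule norm_triangle_ineq4)
    also have "norm (2 * c) = 2 * norm c" by (simp add: norm_mult)
    finally show ?thesis by simp
  qed
  also have "\<dots> \<le> 6 * sqrt p + 2" using b1 b2 b3 b4 b5 unfolding a_def b_def c_def d_def e_def by simp
  finally have "norm (a - b - 2 * c + 2 * (-1) + d - e) \<le> 6 * sqrt p + 2" .
  then show ?thesis unfolding S2_eq t0 a_def b_def c_def d_def e_def by (simp add: norm_divide norm_minus_commute)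
qed

lemma beta_nonneg: "beta \<ge> 0" by (simp add: beta_def)

lemma Rr_bound: "norm (Rr l) \<le> beta^3 / 6"
proof -
  have "norm (Rr l) \<le> \<bar>beta * yy l\<bar>^3 / 6" unfolding Rr_def by (rule cis_taylor)
  also have "\<bar>beta * yy l\<bar>^3 \<le> beta^3"
  proof -
    have "\<bar>beta * yy l\<bar> \<le> beta" using abs_yy[of l] beta_nonneg by (simp add: abs_mult mult_left_le)
    then show ?thesis by (rule power_mono) simp
  qed
  finally show ?thesis by simp
qed

lemma S3_bound: "norm (S3 k) \<le> p * beta^3 / 6"
proof -
  have "norm (S3 k) \<le> (\<Sum>l<p. norm (psi mm l * Rr l * ee p (int l * int k)))"
    unfolding S3_def by (rule norm_sum)
  also have "\<dots> \<le> (\<Sum>l<p. beta^3 / 6)"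
  proof (rule sum_mono)
    fix l
    have "norm (psi mm l * Rr l * ee p (int l * int k)) = norm (psi mm l) * norm (Rr l)" by (simp add: norm_mult)
    also have "\<dots> \<le> 1 * (beta^3 / 6)"
      using norm_psi_le Rr_bound by (intro mult_mono) auto
    finally show "norm (psi mm l * Rr l * ee p (int l * int k)) \<le> beta^3 / 6" by simp
  qed
  finally show ?thesis by simp
qed

end



lemma ring_k0:
  fixes D s t a b c x y :: complex
  assumes "D = 1 + s * (t + a - b + c)" "t = 0" "b = - (x - y)"
  shows "D - s * x = 1 - s * y + s * (a + c)"
  using assms by (simp add: algebra_simps)

lemma ring_k:
  fixes D s t a b c u :: complex
  assumes "D = 1 + s * (t + a - b + c)" "s * t = u"
  shows "D - u = 1 + s * (a - b + c)"
  using assms by (simp add: algebra_simps)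

lemma real_k0: "x > 0 \<Longrightarrow> (8 / x) / 2 * ((x * x - 1) / 4) = x - 1 / (x::real)"
  by (simp add: field_simps)

context pc4
begin

lemma cc_sum: "of_nat p * cc p lam k = (\<Sum>l<p. lam l * ee p (int l * int k))"
  using p_pos by (simp add: cc_def)

lemma lam_sum: "(\<Sum>l<p. lam l * ee p (int l * int k)) = 1 + of_real ss * (\<Sum>l<p. psi mm l * cis (beta * yy l) * ee p (int l * int k))"
proof -
  have "(\<Sum>l<p. lam l * ee p (int l * int k)) = lam 0 * ee p 0 + (\<Sum>l\<in>{0<..<p}. lam l * ee p (int l * int k))"
    using sum_lessThan_split0[of "\<lambda>l. lam l * ee p (int l * int k)"] by simp
  also have "(\<Sum>l\<in>{0<..<p}. lam l * ee p (int l * int k)) = (\<Sum>l\<in>{0<..<p}. of_real ss * (psi mm l * cis (beta * yy l) * ee p (int l * int k)))"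
    by (intro sum.cong refl) (auto simp: lam_def mult_ac)
  also have "\<dots> = of_real ss * (\<Sum>l\<in>{0<..<p}. psi mm l * cis (beta * yy l) * ee p (int l * int k))"
    by (simp add: sum_distrib_left)
  also have "(\<Sum>l\<in>{0<..<p}. psi mm l * cis (beta * yy l) * ee p (int l * int k)) = (\<Sum>l<p. psi mm l * cis (beta * yy l) * ee p (int l * int k))"
    using sum_lessThan_split0[of "\<lambda>l. psi mm l * cis (beta * yy l) * ee p (int l * int k)"] by (simp add: psi_zero)
  finally show ?thesis by (simp add: lam_def)
qed

lemma pt_exp: "psi mm l * cis (beta * yy l) = psi mm l + \<i> * of_real beta * (psi mm l * Yc l)
    - of_real (beta^2 / 2) * (psi mm l * (Yc l)^2) + psi mm l * Rr l"
proof -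
  have o: "complex_of_real (beta * yy l) = of_real beta * Yc l" by (simp add: of_real_yy)
  have E: "cis (beta * yy l) = 1 + \<i> * (of_real beta * Yc l) - (of_real beta * Yc l)^2 / 2 + Rr l"
    unfolding Rr_def o by simp
  show ?thesis unfolding E by (simp add: algebra_simps power_mult_distrib)
qed

lemma main_sum: "(\<Sum>l<p. psi mm l * cis (beta * yy l) * ee p (int l * int k))
    = T mm k + \<i> * of_real beta * S1 k - of_real (beta^2 / 2) * S2 k + S3 k"
  unfolding T_def S1_def S2_def S3_def pt_exp
  by (simp add: algebra_simps sum.distrib sum_subtractf sum_distrib_left)

definition Err :: real where
  "Err = 1 + 1 / sqrt p + beta * sqrt p + (beta^2 / 2) * ((6 * sqrt p + 2) / 8) + p * beta^3 / 6"

lemma beta_sq: "beta^2 = 8 / sqrt p"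
  by (simp add: beta_def power_divide)

lemma Err_parts_nonneg: "0 \<le> beta * sqrt p" "0 \<le> (beta^2 / 2) * ((6 * sqrt p + 2) / 8)" "0 \<le> p * beta^3 / 6"
  using beta_nonneg by auto

lemma cc_est:
  assumes k: "k < p"
  shows "\<exists>u. norm u = 1 \<and> norm (of_nat p * cc p lam k - u * of_real (sqrt p)) \<le> Err"
proof -
  have D: "of_nat p * cc p lam k = 1 + of_real ss * (T mm k + \<i> * of_real beta * S1 k - of_real (beta^2 / 2) * S2 k + S3 k)"
    using cc_sum lam_sum main_sum by simp
  have nS1: "norm (\<i> * of_real beta * S1 k) \<le> beta * sqrt p"
    using S1_bound[of k] beta_nonneg by (simp add: norm_mult mult_left_mono)
  have nS3: "norm (S3 k) \<le> p * beta^3 / 6" by (rule S3_bound)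
  have ssn: "norm (complex_of_real ss) = 1" using ss_abs by simp
  show ?thesis
  proof (cases "k = 0")
    case True
    have Tm0: "T mm 0 = 0" by (rule T_0, rule nt) (use mm_ge in auto)
    have s2: "of_real (beta^2 / 2) * S2 0 = - (complex_of_real (sqrt p) - complex_of_real (1 / sqrt p))"
    proof -
      have rp: "real (p - 1) = sqrt p * sqrt p - 1" using p_pos by (simp add: of_nat_diff)
      have A: "beta^2 / 2 * (real (p - 1) / 4) = sqrt p - 1 / sqrt p"
        unfolding beta_sq rp by (rule real_k0[OF sqrtp_pos])
      have B: "of_real (beta^2 / 2) * S2 0 = - complex_of_real (beta^2 / 2 * (real (p - 1) / 4))"
        by (simp add: S2_0)
      show ?thesis unfolding B A of_real_diff ..
    qed
    define X where "X = of_real ss * complex_of_real (1 / sqrt p)"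
    define W where "W = \<i> * of_real beta * S1 0 + S3 0"
    have nX: "norm X = 1 / sqrt p" unfolding X_def using ss_abs sqrtp_pos by (simp add: norm_mult norm_divide)
    have nW: "norm W \<le> beta * sqrt p + p * beta^3 / 6"
    proof -
      have "norm W \<le> norm (\<i> * of_real beta * S1 0) + norm (S3 0)" unfolding W_def by (rule norm_triangle_ineq)
      then show ?thesis using nS1 nS3 True by simp
    qed
    have nsW: "norm (of_real ss * W) = norm W" using ssn by (simp add: norm_mult)
    have "of_nat p * cc p lam k - of_real ss * of_real (sqrt p) = 1 - X + of_real ss * W"
      unfolding X_def W_def using ring_k0[OF D[unfolded True] Tm0 s2] True by simp
    also have "norm \<dots> \<le> 1 + 1 / sqrt p + (beta * sqrt p + p * beta^3 / 6)"
    proof -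
      have "norm (1 - X + of_real ss * W) \<le> norm (1 - X) + norm (of_real ss * W)" by (rule norm_triangle_ineq)
      moreover have "norm (1 - X) \<le> norm (1::complex) + norm X" by (rule norm_triangle_ineq4)
      ultimately show ?thesis using nX nW nsW by simp
    qed
    also have "\<dots> \<le> Err" unfolding Err_def using Err_parts_nonneg by linarith
    finally show ?thesis by (intro exI[of _ "of_real ss"] conjI ssn)
  next
    case False
    then have k0: "0 < k" by simp
    have nz: "k mod p \<noteq> 0" using False k by simp
    have Tmk: "of_real ss * T mm k = psi mm k * of_real (sqrt p)"
    proof -
      have "T mm k = cnj (psi mm k) * T mm 1" by (rule T_k[OF nz])
      also have "\<dots> = psi mm k * of_real (ss * sqrt p)" by (simp only: chi_cnj Tm_eq)
      finally have "of_real ss * T mm k = psi mm k * (of_real (ss * ss) * of_real (sqrt p))"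
        by (simp add: mult_ac)
      then show ?thesis using ss_sq by simp
    qed
    have nS2: "norm (of_real (beta^2 / 2) * S2 k) \<le> (beta^2 / 2) * ((6 * sqrt p + 2) / 8)"
    proof -
      have "norm (of_real (beta^2 / 2) * S2 k) = \<bar>beta^2 / 2\<bar> * norm (S2 k)" by (simp only: norm_mult norm_of_real)
      also have "\<bar>beta^2 / 2\<bar> = beta^2 / 2" by simp
      finally have e: "norm (of_real (beta^2 / 2) * S2 k) = beta^2 / 2 * norm (S2 k)" .
      show ?thesis unfolding e by (rule mult_left_mono[OF S2_bound[OF k0 k]]) simp
    qed
    define V1 where "V1 = \<i> * of_real beta * S1 k"
    define V2 where "V2 = of_real (beta^2 / 2) * S2 k"
    define V3 where "V3 = S3 k"
    have n1: "norm V1 \<le> beta * sqrt p" unfolding V1_def by (rule nS1)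
    have n2: "norm V2 \<le> (beta^2 / 2) * ((6 * sqrt p + 2) / 8)" unfolding V2_def by (rule nS2)
    have n3: "norm V3 \<le> p * beta^3 / 6" unfolding V3_def by (rule nS3)
    have "of_nat p * cc p lam k - psi mm k * of_real (sqrt p) = 1 + of_real ss * (V1 - V2 + V3)"
      unfolding V1_def V2_def V3_def by (rule ring_k[OF D Tmk])
    also have "norm \<dots> \<le> 1 + (beta * sqrt p + (beta^2 / 2) * ((6 * sqrt p + 2) / 8) + p * beta^3 / 6)"
    proof -
      have t1: "norm (1 + of_real ss * (V1 - V2 + V3)) \<le> norm (1::complex) + norm (of_real ss * (V1 - V2 + V3))"
        by (rule norm_triangle_ineq)
      have t2: "norm (of_real ss * (V1 - V2 + V3)) = norm (V1 - V2 + V3)" using ssn by (simp only: norm_mult)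
      have t3: "norm (V1 - V2 + V3) \<le> norm (V1 - V2) + norm V3" by (rule norm_triangle_ineq)
      have t4: "norm (V1 - V2) \<le> norm V1 + norm V2" by (rule norm_triangle_ineq4)
      show ?thesis using t1 t2 t3 t4 n1 n2 n3 by simp
    qed
    also have "\<dots> \<le> Err"
    proof -
      have "0 \<le> 1 / sqrt p" by simp
      then show ?thesis unfolding Err_def by linarith
    qed
    finally show ?thesis by (intro exI[of _ "psi mm k"] conjI norm_psi[OF nz])
  qed
qed

end



lemma err_alg:
  fixes q s :: real
  assumes q1: "q \<ge> 1" and s: "s * s = 8" "0 \<le> s" "s \<le> 283 / 100"
  shows "1 + 1 / (q * q) + (s / q) * (q * q) + ((s / q)^2 / 2) * ((6 * (q * q) + 2) / 8)
           + ((q * q) * (q * q)) * (s / q)^3 / 6 \<le> 13 * q"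
proof -
  have qp: "q > 0" using q1 by simp
  have a: "(s / q) * (q * q) = s * q" using qp by (simp add: field_simps)
  have b: "((s / q)^2 / 2) * ((6 * (q * q) + 2) / 8) = 3 + 1 / (q * q)"
    using qp s(1) by (simp add: power2_eq_square field_simps)
  have c: "((q * q) * (q * q)) * (s / q)^3 / 6 = q * (8 * s) / 6"
  proof -
    have "((q * q) * (q * q)) * (s / q)^3 = q * (s * s) * s" using qp by (simp add: power3_eq_cube field_simps)
    then show ?thesis using s(1) by simp
  qed
  have d: "1 / (q * q) \<le> 1" using q1 by (simp add: field_simps) (metis mult_mono' one_le_numeral order_trans zero_le_one q1 mult_1 less_imp_le)
  have e1: "s * q \<le> 283 / 100 * q" using s(3) qp by simp
  have e2: "q * (8 * s) / 6 \<le> 378 / 100 * q" using s(3) qp by simp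
  show ?thesis unfolding a b c using d q1 e1 e2 by linarith
qed

context pc4
begin

definition qq :: real where "qq = sqrt (sqrt p)"

lemma qq_ge: "qq \<ge> 1" using p_pos by (simp add: qq_def)
lemma qq_sq: "qq * qq = sqrt p" by (simp add: qq_def)
lemma p_qq: "real p = (qq * qq) * (qq * qq)" by (simp add: qq_sq)

lemma sqrt8: "sqrt 8 * sqrt 8 = (8::real)" "0 \<le> sqrt (8::real)" "sqrt (8::real) \<le> 283 / 100"
proof -
  show "sqrt 8 * sqrt 8 = (8::real)" by simp
  show "0 \<le> sqrt (8::real)" by simp
  have "sqrt (8::real) \<le> sqrt ((283 / 100)^2)" by (subst real_sqrt_le_iff) (simp add: power2_eq_square)
  then show "sqrt (8::real) \<le> 283 / 100" by simp
qed

lemma beta_qq: "beta = sqrt 8 / qq" by (simp add: beta_def qq_def)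

lemma Err_le: "Err \<le> 13 * qq"
proof -
  have "Err = 1 + 1 / (qq * qq) + (sqrt 8 / qq) * (qq * qq) + ((sqrt 8 / qq)^2 / 2) * ((6 * (qq * qq) + 2) / 8)
           + ((qq * qq) * (qq * qq)) * (sqrt 8 / qq)^3 / 6"
    apply (unfold Err_def beta_qq)
    apply (unfold qq_sq[symmetric])
    apply (unfold p_qq)
    apply (rule refl)
    done
  also have "\<dots> \<le> 13 * qq" by (rule err_alg[OF qq_ge sqrt8])
  finally show ?thesis .
qed

lemma cc_bounds:
  assumes k: "k < p"
  shows "(1 - 13 / sqrt (sqrt p)) / sqrt p \<le> norm (cc p lam k)"
    and "norm (cc p lam k) \<le> (1 + 13 / sqrt (sqrt p)) / sqrt p"
proof -
  obtain u where u: "norm u = 1" and e: "norm (of_nat p * cc p lam k - u * of_real (sqrt p)) \<le> Err"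
    using cc_est[OF k] by blast
  have nu: "norm (u * complex_of_real (sqrt p)) = sqrt p" using u by (simp add: norm_mult)
  have nD: "norm (of_nat p * cc p lam k) = real p * norm (cc p lam k)" by (simp add: norm_mult)
  have up: "norm (of_nat p * cc p lam k) \<le> sqrt p + 13 * qq"
    using norm_triangle_ineq2[of "of_nat p * cc p lam k" "u * of_real (sqrt p)"] e nu Err_le
    by linarith
  have lo: "sqrt p - 13 * qq \<le> norm (of_nat p * cc p lam k)"
    using norm_triangle_ineq3[of "of_nat p * cc p lam k" "u * of_real (sqrt p)"] e nu Err_le
    by (smt (verit) norm_minus_commute)
  have qp: "qq > 0" using qq_ge by simp
  have r1: "(1 - 13 / sqrt (sqrt p)) / sqrt p = (sqrt p - 13 * qq) / real p"
    apply (unfold qq_def[symmetric])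
    apply (unfold qq_sq[symmetric])
    apply (unfold p_qq)
    using qp apply (simp add: field_simps)
    done
  have r2: "(1 + 13 / sqrt (sqrt p)) / sqrt p = (sqrt p + 13 * qq) / real p"
    apply (unfold qq_def[symmetric])
    apply (unfold qq_sq[symmetric])
    apply (unfold p_qq)
    using qp apply (simp add: field_simps)
    done
  show "(1 - 13 / sqrt (sqrt p)) / sqrt p \<le> norm (cc p lam k)"
    unfolding r1 using lo nD p_pos by (simp add: divide_le_eq mult.commute)
  show "norm (cc p lam k) \<le> (1 + 13 / sqrt (sqrt p)) / sqrt p"
    unfolding r2 using up nD p_pos by (simp add: le_divide_eq mult.commute)
qed

end



lemma diag_mod: assumes "i < p" "j < (p::nat)" shows "(j + p - i) mod p = 0 \<longleftrightarrow> i = j"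
proof
  assume h: "(j + p - i) mod p = 0"
  show "i = j"
  proof (rule ccontr)
    assume "i \<noteq> j"
    then have a: "0 < j + p - i" and b: "j + p - i < p * 2" and c: "j + p - i \<noteq> p" using assms by auto
    from h obtain t where t: "j + p - i = p * t" by (auto simp: mod_eq_0_iff_dvd elim: dvdE)
    have "0 < t" using a t by (cases t) auto
    moreover have "t < 2" using b t assms by simp
    ultimately have "t = 1" by simp
    then show False using c t by simp
  qed
qed (use assms in simp)

lemma id_circ: "circulant p (\<lambda>i j. if i = j then 1 else 0)"
  unfolding circulant_def
proof (intro allI impI)
  fix i j i' j' assume h: "i < p" "j < p" "i' < p" "j' < p" "(j + p - i) mod p = (j' + p - i') mod p"
  have "i = j \<longleftrightarrow> i' = j'" using diag_mod[OF h(1,2)] diag_mod[OF h(3,4)] h(5) by simp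
  then show "(if i = j then 1 else 0) = (if i' = j' then 1 else (0::real))" by simp
qed

lemma id_orth: "orthogonal_mat p (\<lambda>i j. if i = j then 1 else 0)"
  unfolding orthogonal_mat_def
proof (intro allI impI)
  fix i j assume i: "i < p" and j: "j < p"
  have "(\<Sum>k<p. (if k = i then 1 else 0) * (if k = j then 1 else (0::real))) = (\<Sum>k<p. if k = i then (if i = j then 1 else 0) else 0)"
    by (intro sum.cong refl) auto
  also have "\<dots> = (if i = j then 1 else 0)" using i by simp
  finally show "(\<Sum>k<p. (if k = i then 1 else 0) * (if k = j then 1 else (0::real))) = (if i = j then 1 else 0)" .
qed

definition del :: "nat \<Rightarrow> real" where
  "del p = (if p < 13 then sqrt p else 13 / sqrt (sqrt p))"

lemma del_lim: "\<forall>\<epsilon>>0. \<exists>N. \<forall>p. prime p \<and> p \<ge> N \<longrightarrow> \<bar>del p\<bar> < \<epsilon>"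
proof (intro allI impI)
  fix \<epsilon> :: real assume e: "\<epsilon> > 0"
  define N where "N = max 13 (nat \<lceil>(13 / \<epsilon>)^4\<rceil> + 1)"
  show "\<exists>N. \<forall>p. prime p \<and> p \<ge> N \<longrightarrow> \<bar>del p\<bar> < \<epsilon>"
  proof (intro exI[of _ N] allI impI)
    fix p assume "prime p \<and> p \<ge> N"
    then have pN: "p \<ge> N" by blast
    then have p13: "\<not> p < 13" unfolding N_def by simp
    have "real p > (13 / \<epsilon>)^4"
    proof -
      have "real p \<ge> real (nat \<lceil>(13 / \<epsilon>)^4\<rceil> + 1)" using pN unfolding N_def by simp
      moreover have "real (nat \<lceil>(13 / \<epsilon>)^4\<rceil>) \<ge> (13 / \<epsilon>)^4" by linarith
      ultimately show ?thesis by linarith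
    qed
    then have "sqrt (sqrt (real p)) > sqrt (sqrt ((13 / \<epsilon>)^4))" by simp
    moreover have "sqrt (sqrt ((13 / \<epsilon>)^4)) = 13 / \<epsilon>"
    proof -
      have "(13 / \<epsilon>)^4 = (13 / \<epsilon>)^2 * (13 / \<epsilon>)^2" by (simp add: power4_eq_xxxx power2_eq_square)
      then have "sqrt ((13 / \<epsilon>)^4) = (13 / \<epsilon>)^2" by (simp only: real_sqrt_abs2 abs_power2)
      then show ?thesis using e by simp
    qed
    ultimately have q: "sqrt (sqrt (real p)) > 13 / \<epsilon>" by simp
    have qp: "sqrt (sqrt (real p)) > 0" using q e by (smt (verit) divide_pos_pos)
    have "13 / sqrt (sqrt (real p)) < \<epsilon>" using q e qp by (simp add: divide_less_eq mult.commute pos_divide_less_eq)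
    then show "\<bar>del p\<bar> < \<epsilon>" using p13 qp by (simp add: del_def)
  qed
qed

theorem proposition3p2:
  shows "\<exists>\<delta> :: nat \<Rightarrow> real.
     (\<forall>\<epsilon>>0. \<exists>N. \<forall>p. prime p \<and> p \<ge> N \<longrightarrow> \<bar>\<delta> p\<bar> < \<epsilon>) \<and>
     (\<forall>p. prime p \<and> p mod 4 = 1 \<longrightarrow>
        (\<exists>m :: nat \<Rightarrow> nat \<Rightarrow> real. circulant p m \<and> orthogonal_mat p m \<and>
           (\<forall>i<p. \<forall>j<p.
              (1 - \<delta> p) / sqrt (real p) \<le> \<bar>m i j\<bar> \<and>
              \<bar>m i j\<bar> \<le> (1 + \<delta> p) / sqrt (real p))))"
proof (intro exI[of _ del] conjI del_lim allI impI)
  fix p :: nat assume pp: "prime p \<and> p mod 4 = 1"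
  then have prime: "prime p" and m4: "p mod 4 = 1" by auto
  have p1: "p > 1" using prime prime_gt_1_nat by blast
  show "\<exists>m :: nat \<Rightarrow> nat \<Rightarrow> real. circulant p m \<and> orthogonal_mat p m \<and>
           (\<forall>i<p. \<forall>j<p. (1 - del p) / sqrt (real p) \<le> \<bar>m i j\<bar> \<and> \<bar>m i j\<bar> \<le> (1 + del p) / sqrt (real p))"
  proof (cases "p < 13")
    case True
    then have d: "del p = sqrt p" by (simp add: del_def)
    have sp: "sqrt (real p) \<ge> 1" using p1 by simp
    show ?thesis
    proof (intro exI[of _ "\<lambda>i j. if i = j then 1 else 0"] conjI id_circ id_orth allI impI)
      fix i j assume "i < p" "j < p"
      have "(1 - sqrt p) / sqrt p \<le> 0" using sp by (simp add: divide_nonpos_pos)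
      then show "(1 - del p) / sqrt (real p) \<le> \<bar>if i = j then 1 else 0 :: real\<bar>" unfolding d by simp
      have "1 \<le> (1 + sqrt p) / sqrt p" using sp by (simp add: le_divide_eq)
      then show "\<bar>if i = j then 1 else 0 :: real\<bar> \<le> (1 + del p) / sqrt (real p)" unfolding d by simp
    qed
  next
    case False
    then have d: "del p = 13 / sqrt (sqrt p)" by (simp add: del_def)
    obtain g where g: "residue_primroot p g" using prime_primitive_root_exists[OF p1 prime] by blast
    interpret pc4 p g
      by unfold_locales (use prime g m4 False in auto)
    show ?thesis
    proof (intro exI[of _ "matM p lam"] conjI matM_circulant allI impI)
      show "orthogonal_mat p (matM p lam)"
        by (rule matM_orth[where lam=lam, OF p_pos lam_norm lam_sym])
      fix i j assume i: "i < p" and j: "j < p"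
      have k: "(j + p - i) mod p < p" using p_pos by simp
      have a: "\<bar>matM p lam i j\<bar> = norm (cc p lam ((j + p - i) mod p))"
        by (rule matM_abs[where lam=lam, OF p_pos lam_sym])
      show "(1 - del p) / sqrt (real p) \<le> \<bar>matM p lam i j\<bar>"
        unfolding a d by (rule cc_bounds(1)[OF k])
      show "\<bar>matM p lam i j\<bar> \<le> (1 + del p) / sqrt (real p)"
        unfolding a d by (rule cc_bounds(2)[OF k])
    qed
  qed
qed



end
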